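(* For all $\lambda$-terms $A,B$: (1) If $A\to_{\beta''}B$ then $A\twoheadrightarrow_{\beta'}B$. (2) If $A\to_{\beta'}B$ then $A\twoheadrightarrow_{\beta''}B$.
   Context: Let $\mathcal V$ be an infinite set of variables enumerated in a fixed order $x,y,z,x',y',z',\dots$. $\lambda$-terms: $\mathcal M ::= \mathcal V \mid (\lambda\mathcal V.\mathcal M)\mid(\mathcal M\mathcal M)$; $=_{\mathcal M}$ is syntactic identity. $FV(C)$ is the set of variables with a free occurrence in $C$; $BV(C)$ the set of $v$ with $\lambda v$ occurring in $C$; $FV(vA)=\{v\}\cup FV(A)$, $FV(AB)=FV(A)\cup FV(B)$. A term $C$ is clean iff $BV(C)\cap FV(C)=\emptyset$ and each $\lambda v$ occurs at most once in $C$. Grafting $A\{v:=B\}$: $v\{v:=B\}=B$; $v'\{v:=B\}=v'$ if $v'\neq v$; $(AC)\{v:=B\}=A\{v:=B\}C\{v:=B\}$; $(\lambda v.A)\{v:=B\}=\lambda v.A$; $(\lambda v'.A)\{v:=B\}=\lambda v'.A\{v:=B\}$ if $v\neq v'$. Replacement $A\langle\langle v:=B\rangle\rangle$: $v\langle\langle v:=B\rangle\rangle=B$; $v'\langle\langle v:=B\rangle\rangle=v'$ if $v\neq v'$; $(AC)\langle\langle v:=B\rangle\rangle=A\langle\langle v:=B\rangle\rangle C\langle\langle v:=B\rangle\rangle$; $(\lambda v.A)\langle\langle v:=B\rangle\rangle=\lambda v.A$; $(\lambda v'.A)\langle\langle v:=B\rangle\rangle=\lambda v'.A\langle\langle v:=B\rangle\rangle$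 if $v\neq v'$ and ($v'\notin FV(B)$ or $v\notin FV(A)$); $(\lambda v'.A)\langle\langle v:=B\rangle\rangle=\lambda v''.A\langle\langle v':=v''\rangle\rangle\langle\langle v:=B\rangle\rangle$ if $v\neq v'$, $v'\in FV(B)$, $v\in FV(A)$, with $v''$ the first variable in the ordered list such that $v''\notin FV(AB)$. A relation is compatible if $A\,R\,B$ implies $(AC)R(BC)$, $(CA)R(CB)$, $(\lambda u.A)R(\lambda u.B)$. $\to_\alpha$: least compatible relation with $\lambda v.A\to_\alpha\lambda v'.A\langle\langle v:=v'\rangle\rangle$ for $v'\notin FV(A)$. $\to_{\alpha'}$: least compatible relation with $\lambda v.A\to_{\alpha'}\lambda v'.A\{v:=v'\}$ for $v'\notin FV(vA)$, $v,v'\notin BV(A)$; $\twoheadrightarrow_{\alpha'}$ its reflexive transitive closure. $\to_{\beta'}$: least compatible relation with $(\lambda v.A)B\to_{\beta'}A\langle\langle v:=B\rangle\rangle$; $\twoheadrightarrow_{\beta'}$ is the reflexive transitive closure of $\to_{\beta'}\cup\to_\alpha$. $\to_{\beta''}$: least compatible relation with $(\lambda v.A)B\to_{\beta''}A'\{v':=B'\}$ whenever $(\lambda v.A)B\twoheadrightarrow_{\alpha'}(\lambda v'.A')B'$ and $(\lambda v'.A')B'$ is clean; $\twoheadrightarrow_{\beta''}$ is the reflexive transitive closure of $\to_{\beta''}\cup\to_{\alpha'}$. *)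

theory Defs
  imports Main
begin

text \<open>Variables are natural numbers; the fixed enumeration x,y,z,x',... is 0,1,2,...\<close>
type_synonym var = nat

datatype lterm = Var var | Lam var lterm | App lterm lterm

fun FV :: "lterm \<Rightarrow> var set" where
  "FV (Var v) = {v}"
| "FV (Lam v A) = FV A - {v}"
| "FV (App A B) = FV A \<union> FV B"

fun BV :: "lterm \<Rightarrow> var set" where
  "BV (Var v) = {}"
| "BV (Lam v A) = insert v (BV A)"
| "BV (App A B) = BV A \<union> BV B"

fun binders :: "lterm \<Rightarrow> var list" where
  "binders (Var v) = []"
| "binders (Lam v A) = v # binders A"
| "binders (App A B) = binders A @ binders B"

definition clean :: "lterm \<Rightarrow> bool" where
  "clean C \<longleftrightarrow> BV C \<inter> FV C = {} \<and> distinct (binders C)"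

fun graft :: "lterm \<Rightarrow> var \<Rightarrow> lterm \<Rightarrow> lterm" where
  "graft (Var v') v B = (if v' = v then B else Var v')"
| "graft (App A C) v B = App (graft A v B) (graft C v B)"
| "graft (Lam v' A) v B = (if v' = v then Lam v' A else Lam v' (graft A v B))"

definition fresh :: "var set \<Rightarrow> var" where
  "fresh S = (LEAST v. v \<notin> S)"

function (domintros) repl :: "lterm \<Rightarrow> var \<Rightarrow> lterm \<Rightarrow> lterm" where
  "repl (Var v') v B = (if v' = v then B else Var v')"
| "repl (App A C) v B = App (repl A v B) (repl C v B)"
| "repl (Lam v' A) v B =
     (if v' = v then Lam v' A
      else if v' \<notin> FV B \<or> v \<notin> FV A then Lam v' (repl A v B)
      else (let v'' = fresh (FV (App A B)) in Lam v'' (repl (repl A v' (Var v'')) v B)))"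
  by pat_completeness auto

lemma repl_size: "repl_dom (A, v, Var w) \<Longrightarrow> size (repl A v (Var w)) = size A"
proof (induction A v "Var w" arbitrary: w rule: repl.pinduct)
  case (3 v' A v)
  then show ?case by (auto simp: repl.psimps Let_def)
qed (auto simp: repl.psimps)

termination repl
  by (relation "measure (\<lambda>(A, v, B). size A)") (auto simp: repl_size)

inductive compat :: "(lterm \<Rightarrow> lterm \<Rightarrow> bool) \<Rightarrow> lterm \<Rightarrow> lterm \<Rightarrow> bool" for R where
  base: "R A B \<Longrightarrow> compat R A B"
| appL: "compat R A B \<Longrightarrow> compat R (App A C) (App B C)"
| appR: "compat R A B \<Longrightarrow> compat R (App C A) (App C B)"
| lam: "compat R A B \<Longrightarrow> compat R (Lam u A) (Lam u B)"

definition alpha_base :: "lterm \<Rightarrow> lterm \<Rightarrow> bool" where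
  "alpha_base X Y \<longleftrightarrow> (\<exists>v v' A. X = Lam v A \<and> v' \<notin> FV A \<and> Y = Lam v' (repl A v (Var v')))"

definition alpha :: "lterm \<Rightarrow> lterm \<Rightarrow> bool" where
  "alpha = compat alpha_base"

definition alpha'_base :: "lterm \<Rightarrow> lterm \<Rightarrow> bool" where
  "alpha'_base X Y \<longleftrightarrow> (\<exists>v v' A. X = Lam v A \<and> v' \<notin> FV (App (Var v) A)
      \<and> v \<notin> BV A \<and> v' \<notin> BV A \<and> Y = Lam v' (graft A v (Var v')))"

definition alpha' :: "lterm \<Rightarrow> lterm \<Rightarrow> bool" where
  "alpha' = compat alpha'_base"

definition alpha'_star :: "lterm \<Rightarrow> lterm \<Rightarrow> bool" where
  "alpha'_star = alpha'\<^sup>*\<^sup>*"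

definition beta'_base :: "lterm \<Rightarrow> lterm \<Rightarrow> bool" where
  "beta'_base X Y \<longleftrightarrow> (\<exists>v A B. X = App (Lam v A) B \<and> Y = repl A v B)"

definition beta' :: "lterm \<Rightarrow> lterm \<Rightarrow> bool" where
  "beta' = compat beta'_base"

definition beta'_star :: "lterm \<Rightarrow> lterm \<Rightarrow> bool" where
  "beta'_star = (\<lambda>X Y. beta' X Y \<or> alpha X Y)\<^sup>*\<^sup>*"

definition beta''_base :: "lterm \<Rightarrow> lterm \<Rightarrow> bool" where
  "beta''_base X Y \<longleftrightarrow> (\<exists>v A B v' A' B'. X = App (Lam v A) B
      \<and> alpha'_star (App (Lam v A) B) (App (Lam v' A') B')
      \<and> clean (App (Lam v' A') B') \<and> Y = graft A' v' B')"

definition beta'' :: "lterm \<Rightarrow> lterm \<Rightarrow> bool" where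
  "beta'' = compat beta''_base"

definition beta''_star :: "lterm \<Rightarrow> lterm \<Rightarrow> bool" where
  "beta''_star = (\<lambda>X Y. beta'' X Y \<or> alpha' X Y)\<^sup>*\<^sup>*"

end

theory Submission
  imports Defs
begin


datatype dterm = Fr var | Bd nat | DLam dterm | DApp dterm dterm

fun lift :: "nat \<Rightarrow> dterm \<Rightarrow> dterm" where
  "lift k (Fr x) = Fr x"
| "lift k (Bd i) = (if i < k then Bd i else Bd (Suc i))"
| "lift k (DLam t) = DLam (lift (Suc k) t)"
| "lift k (DApp s t) = DApp (lift k s) (lift k t)"

fun closeat :: "nat \<Rightarrow> var \<Rightarrow> dterm \<Rightarrow> dterm" where
  "closeat j v (Fr x) = (if x = v then Bd j else Fr x)"
| "closeat j v (Bd i) = Bd i"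
| "closeat j v (DLam t) = DLam (closeat (Suc j) v t)"
| "closeat j v (DApp s t) = DApp (closeat j v s) (closeat j v t)"

fun openat :: "nat \<Rightarrow> dterm \<Rightarrow> dterm \<Rightarrow> dterm" where
  "openat j N (Fr x) = Fr x"
| "openat j N (Bd i) = (if i = j then N else Bd i)"
| "openat j N (DLam t) = DLam (openat (Suc j) N t)"
| "openat j N (DApp s t) = DApp (openat j N s) (openat j N t)"

fun lc :: "nat \<Rightarrow> dterm \<Rightarrow> bool" where
  "lc k (Fr x) = True"
| "lc k (Bd i) = (i < k)"
| "lc k (DLam t) = lc (Suc k) t"
| "lc k (DApp s t) = (lc k s \<and> lc k t)"

fun frees :: "dterm \<Rightarrow> var set" where
  "frees (Fr x) = {x}"
| "frees (Bd i) = {}"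
| "frees (DLam t) = frees t"
| "frees (DApp s t) = frees s \<union> frees t"

fun dsize :: "dterm \<Rightarrow> nat" where
  "dsize (Fr x) = 0"
| "dsize (Bd i) = 0"
| "dsize (DLam t) = Suc (dsize t)"
| "dsize (DApp s t) = dsize s + dsize t"

fun undb :: "nat \<Rightarrow> nat \<Rightarrow> var list \<Rightarrow> dterm \<Rightarrow> lterm" where
  "undb b q env (Fr x) = Var x"
| "undb b q env (Bd i) = Var (env ! i)"
| "undb b q env (DLam t) = Lam (b+q) (undb b (Suc q) ((b+q)#env) t)"
| "undb b q env (DApp s t) = App (undb b q env s) (undb b (q + dsize s) env t)"

fun sem :: "(var \<Rightarrow> dterm) \<Rightarrow> lterm \<Rightarrow> dterm" where
  "sem \<rho> (Var x) = \<rho> x"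
| "sem \<rho> (Lam v A) = DLam (sem ((lift 0 \<circ> \<rho>)(v := Bd 0)) A)"
| "sem \<rho> (App A B) = DApp (sem \<rho> A) (sem \<rho> B)"

lemma sem_cong: "(\<And>z. z \<in> FV A \<Longrightarrow> \<rho> z = \<rho>' z) \<Longrightarrow> sem \<rho> A = sem \<rho>' A"
proof (induction A arbitrary: \<rho> \<rho>')
  case (Lam v A)
  have "sem ((lift 0 \<circ> \<rho>)(v := Bd 0)) A = sem ((lift 0 \<circ> \<rho>')(v := Bd 0)) A"
    apply (rule Lam.IH) using Lam.prems by simp
  then show ?case by (simp only: sem.simps)
next
  case (App A B)
  have "sem \<rho> A = sem \<rho>' A" by (rule App.IH(1)) (use App.prems in simp)
  moreover have "sem \<rho> B = sem \<rho>' B" by (rule App.IH(2)) (use App.prems in simp)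
  ultimately show ?case by (simp only: sem.simps)
next
  case (Var x) then show ?case by simp
qed

lemma lift_lift: "j \<le> k \<Longrightarrow> lift (Suc k) (lift j t) = lift j (lift k t)"
  by (induction t arbitrary: j k) auto

lemma sem_lift: "sem (lift k \<circ> \<rho>) A = lift k (sem \<rho> A)"
proof (induction A arbitrary: k \<rho>)
  case (Lam v A)
  have eq: "(lift 0 \<circ> (lift k \<circ> \<rho>))(v := Bd 0) = lift (Suc k) \<circ> ((lift 0 \<circ> \<rho>)(v := Bd 0))"
    by (auto simp: fun_eq_iff lift_lift)
  have "sem (lift k \<circ> \<rho>) (Lam v A) = DLam (sem ((lift 0 \<circ> (lift k \<circ> \<rho>))(v := Bd 0)) A)"
    by (simp only: sem.simps)
  also have "\<dots> = DLam (lift (Suc k) (sem ((lift 0 \<circ> \<rho>)(v := Bd 0)) A))"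
    by (simp only: eq Lam.IH)
  finally show ?case by (simp only: sem.simps lift.simps)
qed auto

lemma fresh_notin: "finite S \<Longrightarrow> fresh S \<notin> S"
  unfolding fresh_def by (rule LeastI_ex) (meson ex_new_if_finite infinite_UNIV_nat)

lemma finite_FV: "finite (FV A)"
  by (induction A) auto

lemma repl_lam1: "v' \<noteq> v \<Longrightarrow> v' \<notin> FV B \<or> v \<notin> FV A \<Longrightarrow> repl (Lam v' A) v B = Lam v' (repl A v B)"
  by (simp only: repl.simps if_False if_True simp_thms)

lemma repl_nofree: "v \<notin> FV A \<Longrightarrow> repl A v B = A"
proof (induction A v B rule: repl.induct)
  case (3 v' A v B)
  show ?case
  proof (cases "v' = v")
    case True then show ?thesis by (simp only: repl.simps True simp_thms if_True)
  next
    case False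
    then have "v \<notin> FV A" using 3(4) by simp
    then show ?thesis using repl_lam1[OF False] 3(1)[OF False] by simp
  qed
qed simp_all

lemma sem_repl: "sem \<rho> (repl A v B) = sem (\<rho>(v := sem \<rho> B)) A"
proof (induction A v B arbitrary: \<rho> rule: repl.induct)
  case (3 v' A v B)
  show ?case
  proof (cases "v' = v")
    case True
    then show ?thesis by simp (rule sem_cong, auto)
  next
    case vv: False
    show ?thesis
    proof (cases "v \<in> FV A")
      case False
      then show ?thesis using repl_nofree[of v "Lam v' A" B]
        by (metis FV.simps(2) DiffE fun_upd_other sem_cong)
    next
      case vA: True
      show ?thesis
      proof (cases "v' \<in> FV B")
        case False
        have e: "sem ((lift 0 \<circ> \<rho>)(v' := Bd 0)) B = lift 0 (sem \<rho> B)"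
          by (metis False fun_upd_other sem_cong sem_lift)
        have fe: "((lift 0 \<circ> \<rho>)(v' := Bd 0))(v := lift 0 (sem \<rho> B))
              = (lift 0 \<circ> \<rho>(v := sem \<rho> B))(v' := Bd 0)"
          using vv by (auto simp: fun_eq_iff)
        have IH: "sem ((lift 0 \<circ> \<rho>)(v' := Bd 0)) (repl A v B) = sem (((lift 0 \<circ> \<rho>)(v' := Bd 0))(v := sem ((lift 0 \<circ> \<rho>)(v' := Bd 0)) B)) A"
          using 3(1) vv False by blast
        have r: "repl (Lam v' A) v B = Lam v' (repl A v B)" using vv False by simp
        show ?thesis unfolding r sem.simps IH e fe ..
      next
        case True
        define w where "w = fresh (FV (App A B))"
        have w: "w \<notin> FV A" "w \<notin> FV B" using fresh_notin[OF finite_FV, of "App A B"] w_def by auto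
        have wv: "w \<noteq> v" using w vA by auto
        let ?r2 = "(lift 0 \<circ> \<rho>)(w := Bd 0)"
        have e: "sem ?r2 B = lift 0 (sem \<rho> B)"
          by (metis w(2) fun_upd_other sem_cong sem_lift)
        have IH2: "sem ?r2 (repl (repl A v' (Var w)) v B) = sem (?r2(v := sem ?r2 B)) (repl A v' (Var w))"
          by (rule 3(3)[of w ?r2]) (use vv True vA w_def in auto)
        have IH1: "sem (?r2(v := sem ?r2 B)) (repl A v' (Var w)) =
               sem ((?r2(v := sem ?r2 B))(v' := sem (?r2(v := sem ?r2 B)) (Var w))) A"
          by (rule 3(2)[of w "?r2(v := sem ?r2 B)"]) (use vv True vA w_def in auto)
        have "sem ((?r2(v := sem ?r2 B))(v' := sem (?r2(v := sem ?r2 B)) (Var w))) A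
            = sem ((lift 0 \<circ> \<rho>(v := sem \<rho> B))(v' := Bd 0)) A"
          by (rule sem_cong) (use w wv e in auto)
        moreover have r: "repl (Lam v' A) v B = Lam w (repl (repl A v' (Var w)) v B)"
          using vv True vA by (simp add: Let_def w_def)
        ultimately show ?thesis using IH1 IH2 unfolding r sem.simps by (simp only: dterm.inject)
      qed
    qed
  qed
qed auto



lemma graft_repl: "BV A \<inter> FV B = {} \<Longrightarrow> graft A v B = repl A v B"
proof (induction A)
  case (Lam w C)
  show ?case
  proof (cases "w = v")
    case True then show ?thesis by (simp only: graft.simps repl.simps True simp_thms if_True)
  next
    case False
    have "w \<notin> FV B" using Lam.prems by auto
    then have "repl (Lam w C) v B = Lam w (repl C v B)" using repl_lam1 False by blast
    moreover have "graft C v B = repl C v B" using Lam by auto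
    ultimately show ?thesis using False by simp
  qed
qed auto

lemma BV_graft_var: "BV (graft A v (Var w)) = BV A"
  by (induction A) auto

lemma graft_nofree: "v \<notin> FV A \<Longrightarrow> graft A v B = A"
  by (induction A) auto

lemma FV_graft_var: "w \<noteq> v \<Longrightarrow> v \<notin> FV (graft A v (Var w))"
  by (induction A) auto

lemma FV_graft_var2: "FV (graft A v (Var w)) \<subseteq> FV A \<union> {w}"
  by (induction A) auto

lemma graft_back: "v' \<notin> FV A \<Longrightarrow> v' \<notin> BV A \<Longrightarrow> graft (graft A v (Var v')) v' (Var v) = A"
proof (induction A)
  case (Lam w C)
  show ?case
  proof (cases "w = v")
    case True
    then have "v' \<noteq> v" using Lam.prems by auto
    moreover have "v' \<notin> FV C" using Lam.prems True calculation by auto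
    ultimately show ?thesis using True by (simp add: graft_nofree)
  next
    case False
    then show ?thesis using Lam by auto
  qed
qed auto

lemma compat_mono: "compat R X Y \<Longrightarrow> (\<And>X Y. R X Y \<Longrightarrow> S X Y) \<Longrightarrow> compat S X Y"
  by (induction rule: compat.induct) (auto intro: compat.intros)

lemma compat_sym: "compat R X Y \<Longrightarrow> (\<And>X Y. R X Y \<Longrightarrow> R Y X) \<Longrightarrow> compat R Y X"
  by (induction rule: compat.induct) (auto intro: compat.intros)

lemma compat_sem: "compat R X Y \<Longrightarrow> (\<And>X Y \<rho>. R X Y \<Longrightarrow> sem \<rho> X = sem \<rho> Y) \<Longrightarrow> sem \<rho> X = sem \<rho> Y"
proof (induction arbitrary: \<rho> rule: compat.induct)
  case (lam A B u)
  have "sem ((lift 0 \<circ> \<rho>)(u := Bd 0)) A = sem ((lift 0 \<circ> \<rho>)(u := Bd 0)) B"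
    by (rule lam.IH) (rule lam.prems)
  then show ?case by (simp only: sem.simps)
qed auto

lemma alpha'_base_sem: "alpha'_base X Y \<Longrightarrow> sem \<rho> X = sem \<rho> Y"
proof -
  assume "alpha'_base X Y"
  then obtain v v' A where X: "X = Lam v A" and c: "v' \<notin> FV (App (Var v) A)" "v \<notin> BV A" "v' \<notin> BV A"
    and Y: "Y = Lam v' (graft A v (Var v'))" unfolding alpha'_base_def by blast
  have g: "graft A v (Var v') = repl A v (Var v')" using c by (intro graft_repl) auto
  let ?r1 = "(lift 0 \<circ> \<rho>)(v' := Bd 0)"
  have "sem ?r1 (repl A v (Var v')) = sem (?r1(v := sem ?r1 (Var v'))) A" by (rule sem_repl)
  also have "\<dots> = sem ((lift 0 \<circ> \<rho>)(v := Bd 0)) A"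
    by (rule sem_cong) (use c in auto)
  finally show ?thesis unfolding X Y g by (simp only: sem.simps)
qed

lemma alpha'_base_sym: "alpha'_base X Y \<Longrightarrow> alpha'_base Y X"
proof -
  assume "alpha'_base X Y"
  then obtain v v' A where X: "X = Lam v A" and c: "v' \<notin> FV (App (Var v) A)" "v \<notin> BV A" "v' \<notin> BV A"
    and Y: "Y = Lam v' (graft A v (Var v'))" unfolding alpha'_base_def by blast
  have vv: "v' \<noteq> v" using c by auto
  show ?thesis unfolding alpha'_base_def
    apply (rule exI[of _ v'], rule exI[of _ v], rule exI[of _ "graft A v (Var v')"])
    using c vv FV_graft_var[of v' v A] BV_graft_var[of A v v'] graft_back[of v' A v] X Y by auto
qed

lemma alpha'_sem: "alpha'_star X Y \<Longrightarrow> sem \<rho> X = sem \<rho> Y"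
  unfolding alpha'_star_def alpha'_def
  by (induction rule: rtranclp_induct) (auto dest: compat_sem[OF _ alpha'_base_sem])

lemma alpha'_star_sym: "alpha'_star X Y \<Longrightarrow> alpha'_star Y X"
  unfolding alpha'_star_def
proof (induction rule: rtranclp_induct)
  case (step y z)
  have "alpha' z y" using step(2) unfolding alpha'_def by (rule compat_sym) (rule alpha'_base_sym)
  then show ?case using step(3) by (rule converse_rtranclp_into_rtranclp)
qed simp

lemma rtc_appL: "r\<^sup>*\<^sup>* A B \<Longrightarrow> (\<And>X Y. r X Y \<Longrightarrow> r (App X C) (App Y C)) \<Longrightarrow> r\<^sup>*\<^sup>* (App A C) (App B C)"
  by (induction rule: rtranclp_induct) (auto intro: rtranclp.rtrancl_into_rtrancl)

lemma rtc_appR: "r\<^sup>*\<^sup>* A B \<Longrightarrow> (\<And>X Y. r X Y \<Longrightarrow> r (App C X) (App C Y)) \<Longrightarrow> r\<^sup>*\<^sup>* (App C A) (App C B)"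
  by (induction rule: rtranclp_induct) (auto intro: rtranclp.rtrancl_into_rtrancl)

lemma rtc_lam: "r\<^sup>*\<^sup>* A B \<Longrightarrow> (\<And>X Y. r X Y \<Longrightarrow> r (Lam u X) (Lam u Y)) \<Longrightarrow> r\<^sup>*\<^sup>* (Lam u A) (Lam u B)"
  by (induction rule: rtranclp_induct) (auto intro: rtranclp.rtrancl_into_rtrancl)



lemma semFr_Lam: "sem Fr (Lam v A) = DLam (sem (Fr(v := Bd 0)) A)"
proof -
  have "(lift 0 \<circ> Fr) = Fr" by (auto simp: fun_eq_iff)
  then show ?thesis by simp
qed

lemma lift_closeat: "k \<le> j \<Longrightarrow> lift k (closeat j v t) = closeat (Suc j) v (lift k t)"
  by (induction t arbitrary: k j) auto

lemma sem_closeat: "sem (closeat j v \<circ> \<rho>) A = closeat j v (sem \<rho> A)"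
proof (induction A arbitrary: j \<rho>)
  case (Lam w A)
  have eq: "(lift 0 \<circ> (closeat j v \<circ> \<rho>))(w := Bd 0) = closeat (Suc j) v \<circ> ((lift 0 \<circ> \<rho>)(w := Bd 0))"
    by (auto simp: fun_eq_iff lift_closeat)
  have "sem (closeat j v \<circ> \<rho>) (Lam w A) = DLam (sem ((lift 0 \<circ> (closeat j v \<circ> \<rho>))(w := Bd 0)) A)"
    by (simp only: sem.simps)
  also have "\<dots> = DLam (closeat (Suc j) v (sem ((lift 0 \<circ> \<rho>)(w := Bd 0)) A))"
    by (simp only: eq Lam.IH)
  finally show ?case by (simp only: sem.simps closeat.simps)
qed auto

lemma semFr_close: "sem (Fr(v := Bd 0)) A = closeat 0 v (sem Fr A)"
proof -
  have "closeat 0 v \<circ> Fr = Fr(v := Bd 0)" by (auto simp: fun_eq_iff)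
  then show ?thesis using sem_closeat[of 0 v Fr A] by simp
qed

lemma lift_lc: "lc m t \<Longrightarrow> m \<le> k \<Longrightarrow> lift k t = t"
  by (induction t arbitrary: m k) auto

lemma lift_openat: "k \<le> j \<Longrightarrow> lc 0 N \<Longrightarrow> lift k (openat j N t) = openat (Suc j) N (lift k t)"
  by (induction t arbitrary: k j) (auto simp: lift_lc)

lemma sem_openat: "lc 0 N \<Longrightarrow> sem (openat j N \<circ> \<rho>) A = openat j N (sem \<rho> A)"
proof (induction A arbitrary: j \<rho>)
  case (Lam w A)
  have eq: "(lift 0 \<circ> (openat j N \<circ> \<rho>))(w := Bd 0) = openat (Suc j) N \<circ> ((lift 0 \<circ> \<rho>)(w := Bd 0))"
    using Lam.prems by (auto simp: fun_eq_iff lift_openat)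
  have "sem (openat j N \<circ> \<rho>) (Lam w A) = DLam (sem ((lift 0 \<circ> (openat j N \<circ> \<rho>))(w := Bd 0)) A)"
    by (simp only: sem.simps)
  also have "\<dots> = DLam (openat (Suc j) N (sem ((lift 0 \<circ> \<rho>)(w := Bd 0)) A))"
    by (simp only: eq Lam.IH Lam.prems)
  finally show ?case by (simp only: sem.simps openat.simps)
qed auto

lemma semFr_open: "lc 0 N \<Longrightarrow> sem (Fr(x := N)) A = openat 0 N (sem (Fr(x := Bd 0)) A)"
proof -
  assume N: "lc 0 N"
  have "openat 0 N \<circ> Fr(x := Bd 0) = Fr(x := N)" by (auto simp: fun_eq_iff)
  then show ?thesis using sem_openat[OF N, of 0 "Fr(x := Bd 0)" A] by simp
qed

lemma lc_lift: "lc k t \<Longrightarrow> lc (Suc k) (lift j t)"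
  by (induction t arbitrary: k j) auto

lemma lc_mono: "lc k t \<Longrightarrow> k \<le> k' \<Longrightarrow> lc k' t"
  by (induction t arbitrary: k k') auto

lemma lc_sem: "(\<And>z. lc k (\<rho> z)) \<Longrightarrow> lc k (sem \<rho> A)"
proof (induction A arbitrary: k \<rho>)
  case (Lam v A)
  have "lc (Suc k) (sem ((lift 0 \<circ> \<rho>)(v := Bd 0)) A)"
    by (rule Lam.IH) (use Lam.prems lc_lift in auto)
  then show ?case by simp
qed auto

lemma lc_D: "lc 0 (sem Fr A)"
  by (rule lc_sem) simp

lemma frees_lift: "frees (lift k t) = frees t"
  by (induction t arbitrary: k) auto

lemma frees_sem: "frees (sem \<rho> A) \<subseteq> (\<Union>z\<in>FV A. frees (\<rho> z))"
proof (induction A arbitrary: \<rho>)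
  case (Lam v A)
  have "frees (sem ((lift 0 \<circ> \<rho>)(v := Bd 0)) A) \<subseteq> (\<Union>z\<in>FV A. frees (((lift 0 \<circ> \<rho>)(v := Bd 0)) z))"
    by (rule Lam.IH)
  also have "\<dots> \<subseteq> (\<Union>z\<in>FV (Lam v A). frees (\<rho> z))" by (auto simp: frees_lift split: if_splits)
  finally show ?case by simp
next
  case (App A B)
  show ?case using App.IH[of \<rho>] by auto
qed auto

lemma frees_D: "frees (sem Fr A) \<subseteq> FV A"
  using frees_sem[of Fr A] by auto

lemma set_binders: "set (binders A) = BV A"
  by (induction A) auto

lemma FV_undb: "lc (length env) t \<Longrightarrow> FV (undb b q env t) \<subseteq> frees t \<union> set env"
proof (induction t arbitrary: q env)
  case (DLam t)
  have "FV (undb b (Suc q) ((b+q)#env) t) \<subseteq> frees t \<union> set ((b+q)#env)"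
    by (rule DLam.IH) (use DLam.prems in simp)
  then show ?case by auto
next
  case (DApp s t)
  have "FV (undb b q env s) \<subseteq> frees s \<union> set env" by (rule DApp.IH(1)) (use DApp.prems in simp)
  moreover have "FV (undb b (q + dsize s) env t) \<subseteq> frees t \<union> set env" by (rule DApp.IH(2)) (use DApp.prems in simp)
  ultimately show ?case by auto
qed auto

lemma dsize_closeat: "dsize (closeat j v t) = dsize t"
  by (induction t arbitrary: j) auto

lemma BV_undb: "BV (undb b q env t) \<subseteq> {b+q ..< b+q+dsize t}"
  by (induction t arbitrary: q env) fastforce+

lemma distinct_undb: "distinct (binders (undb b q env t))"
proof (induction t arbitrary: q env)
  case (DLam t)
  then show ?case using BV_undb[of b "Suc q" "(b+q)#env" t] by (auto simp: set_binders)
next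
  case (DApp s t)
  then show ?case using BV_undb[of b q env s] BV_undb[of b "q + dsize s" env t]
    by (fastforce simp: set_binders)
qed auto

lemma graft_undb: "lc (length env) t \<Longrightarrow> v \<notin> set env \<Longrightarrow> v < b \<Longrightarrow>
  graft (undb b q env t) v (Var w) = undb b q (env @ [w]) (closeat (length env) v t)"
proof (induction t arbitrary: q env)
  case (Bd i)
  then have "env ! i \<noteq> v" using nth_mem by fastforce
  then show ?case using Bd by (simp add: nth_append)
next
  case (DLam t)
  then show ?case by simp
qed (auto simp: dsize_closeat)



lemma alpha'_star_lam: "alpha'_star A B \<Longrightarrow> alpha'_star (Lam u A) (Lam u B)"
  unfolding alpha'_star_def alpha'_def by (erule rtc_lam) (rule compat.lam)

lemma alpha'_star_app: "alpha'_star A B \<Longrightarrow> alpha'_star C D \<Longrightarrow> alpha'_star (App A C) (App B D)"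
proof -
  assume a: "alpha'_star A B" and c: "alpha'_star C D"
  have a': "(compat alpha'_base)\<^sup>*\<^sup>* A B" using a unfolding alpha'_star_def alpha'_def .
  have c': "(compat alpha'_base)\<^sup>*\<^sup>* C D" using c unfolding alpha'_star_def alpha'_def .
  have "(compat alpha'_base)\<^sup>*\<^sup>* (App A C) (App B C)"
    by (rule rtc_appL[OF a']) (rule compat.appL)
  moreover have "(compat alpha'_base)\<^sup>*\<^sup>* (App B C) (App B D)"
    by (rule rtc_appR[OF c']) (rule compat.appR)
  ultimately show ?thesis unfolding alpha'_star_def alpha'_def by simp
qed

lemma canon: "(\<And>x. x \<in> FV M \<union> BV M \<Longrightarrow> x < b) \<Longrightarrow> alpha'_star M (undb b q [] (sem Fr M))"
proof (induction M arbitrary: q)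
  case (Var x)
  then show ?case by (simp add: alpha'_star_def)
next
  case (App A B)
  have "alpha'_star A (undb b q [] (sem Fr A))" by (rule App.IH(1)) (use App.prems in auto)
  moreover have "alpha'_star B (undb b (q + dsize (sem Fr A)) [] (sem Fr B))" by (rule App.IH(2)) (use App.prems in auto)
  ultimately show ?case by (simp add: alpha'_star_app)
next
  case (Lam v A)
  define A1 where "A1 = undb b (Suc q) [] (sem Fr A)"
  have vb: "v < b" using Lam.prems by auto
  have FA: "\<And>x. x \<in> FV A \<Longrightarrow> x < b" using Lam.prems vb by (cases "x = v") auto
  have s1: "alpha'_star A A1" unfolding A1_def by (rule Lam.IH) (use Lam.prems FA in auto)
  have FV1: "FV A1 \<subseteq> FV A" using FV_undb[of "[]" "sem Fr A" b "Suc q"] lc_D[of A] frees_D[of A]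
    unfolding A1_def by auto
  have BV1: "BV A1 \<subseteq> {b + Suc q ..< b + Suc q + dsize (sem Fr A)}" unfolding A1_def by (rule BV_undb)
  have base: "alpha'_base (Lam v A1) (Lam (b+q) (graft A1 v (Var (b+q))))"
    unfolding alpha'_base_def
    apply (rule exI[of _ v], rule exI[of _ "b+q"], rule exI[of _ A1])
    using vb FV1 BV1 FA by fastforce
  have g: "graft A1 v (Var (b+q)) = undb b (Suc q) [b+q] (closeat 0 v (sem Fr A))"
    unfolding A1_def using graft_undb[of "[]" "sem Fr A" v b "Suc q" "b+q"] lc_D[of A] vb by simp
  have "alpha'_star (Lam v A) (Lam v A1)" by (rule alpha'_star_lam[OF s1])
  moreover have "alpha' (Lam v A1) (Lam (b+q) (undb b (Suc q) [b+q] (closeat 0 v (sem Fr A))))"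
    unfolding alpha'_def using base g by (simp add: compat.base)
  ultimately have "alpha'_star (Lam v A) (Lam (b+q) (undb b (Suc q) [b+q] (closeat 0 v (sem Fr A))))"
    unfolding alpha'_star_def by simp
  then show ?case unfolding semFr_Lam semFr_close undb.simps by simp
qed

lemma finite_BV: "finite (BV A)"
  by (induction A) auto

lemma complete: "sem Fr M = sem Fr N \<Longrightarrow> alpha'_star M N"
proof -
  assume e: "sem Fr M = sem Fr N"
  define S where "S = FV M \<union> BV M \<union> FV N \<union> BV N"
  have fin: "finite S" unfolding S_def by (simp add: finite_FV finite_BV)
  define b where "b = Suc (Max S)"
  have lt: "\<And>x. x \<in> S \<Longrightarrow> x < b" unfolding b_def using fin by (simp add: le_imp_less_Suc)
  have "alpha'_star M (undb b 0 [] (sem Fr M))" by (rule canon) (use lt S_def in auto)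
  moreover have "alpha'_star N (undb b 0 [] (sem Fr N))" by (rule canon) (use lt S_def in auto)
  ultimately show ?thesis using e alpha'_star_sym unfolding alpha'_star_def by (metis rtranclp_trans)
qed



lemma rtc_mono: "r\<^sup>*\<^sup>* A B \<Longrightarrow> (\<And>X Y. r X Y \<Longrightarrow> s X Y) \<Longrightarrow> s\<^sup>*\<^sup>* A B"
  by (induction rule: rtranclp_induct) (auto intro: rtranclp.rtrancl_into_rtrancl)

lemma alpha'_alpha: "alpha' X Y \<Longrightarrow> alpha X Y"
  unfolding alpha'_def alpha_def
proof (erule compat_mono)
  fix X Y assume "alpha'_base X Y"
  then obtain v v' A where X: "X = Lam v A" and c: "v' \<notin> FV (App (Var v) A)" "v \<notin> BV A" "v' \<notin> BV A"
    and Y: "Y = Lam v' (graft A v (Var v'))" unfolding alpha'_base_def by blast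
  have g: "graft A v (Var v') = repl A v (Var v')" using c by (intro graft_repl) auto
  show "alpha_base X Y" unfolding alpha_base_def using X Y g c by auto
qed

lemma part1_base: "beta''_base X Y \<Longrightarrow> beta'_star X Y"
proof -
  assume "beta''_base X Y"
  then obtain v A B v' A' B' where X: "X = App (Lam v A) B"
    and s: "alpha'_star (App (Lam v A) B) (App (Lam v' A') B')"
    and cl: "clean (App (Lam v' A') B')" and Y: "Y = graft A' v' B'"
    unfolding beta''_base_def by blast
  have "beta'_star X (App (Lam v' A') B')" using s unfolding X alpha'_star_def beta'_star_def
    by (rule rtc_mono) (simp add: alpha'_alpha)
  moreover have "BV A' \<inter> FV B' = {}" using cl unfolding clean_def by auto
  then have "Y = repl A' v' B'" using Y graft_repl by simp
  then have "beta' (App (Lam v' A') B') Y" unfolding beta'_def beta'_base_def by (auto intro: compat.base)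
  ultimately show ?thesis unfolding beta'_star_def by (simp add: rtranclp.rtrancl_into_rtrancl)
qed

lemma part1: "beta'' A B \<Longrightarrow> beta'_star A B"
  unfolding beta''_def
proof (induction rule: compat.induct)
  case (base A B) then show ?case by (rule part1_base)
next
  case (appL A B C) show ?case using appL.IH unfolding beta'_star_def
    by (rule rtc_appL) (auto simp: beta'_def alpha_def intro: compat.appL)
next
  case (appR A B C) show ?case using appR.IH unfolding beta'_star_def
    by (rule rtc_appR) (auto simp: beta'_def alpha_def intro: compat.appR)
next
  case (lam A B u) show ?case using lam.IH unfolding beta'_star_def
    by (rule rtc_lam) (auto simp: beta'_def alpha_def intro: compat.lam)
qed

lemma part2_base: "beta'_base X Y \<Longrightarrow> beta''_star X Y"
proof -
  assume "beta'_base X Y"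
  then obtain v A B where X: "X = App (Lam v A) B" and Y: "Y = repl A v B"
    unfolding beta'_base_def by blast
  define S where "S = FV X \<union> BV X"
  have fin: "finite S" unfolding S_def by (simp add: finite_FV finite_BV)
  define b where "b = Suc (Max S)"
  have lt: "\<And>x. x \<in> S \<Longrightarrow> x < b" unfolding b_def using fin by (simp add: le_imp_less_Suc)
  define C where "C = undb b 0 [] (sem Fr X)"
  have XC: "alpha'_star X C" unfolding C_def by (rule canon) (use lt S_def in auto)
  define TA where "TA = sem (Fr(v := Bd 0)) A"
  have DX: "sem Fr X = DApp (DLam TA) (sem Fr B)" unfolding X TA_def by (simp only: sem.simps(3) semFr_Lam)
  define A' where "A' = undb b (Suc 0) [b] TA"
  define B' where "B' = undb b (dsize (DLam TA)) [] (sem Fr B)"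
  have C: "C = App (Lam b A') B'" unfolding C_def DX A'_def B'_def by simp
  have FVC: "FV C \<subseteq> FV X" using FV_undb[of "[]" "sem Fr X" b 0] lc_D[of X] frees_D[of X]
    unfolding C_def by auto
  have BVC: "BV C \<subseteq> {b..}" using BV_undb[of b 0 "[]" "sem Fr X"] unfolding C_def by auto
  have clean: "clean C" unfolding clean_def
  proof
    show "BV C \<inter> FV C = {}" using FVC BVC lt S_def by fastforce
    show "distinct (binders C)" unfolding C_def by (rule distinct_undb)
  qed
  define G where "G = graft A' b B'"
  have "beta''_base X G" unfolding beta''_base_def G_def
    using X XC clean C by blast
  then have XG: "beta''_star X G" unfolding beta''_star_def beta''_def by (auto intro: compat.base)
  have "sem Fr C = sem Fr X" using XC by (simp add: alpha'_sem)
  then have e1: "sem (Fr(b := Bd 0)) A' = TA" and e2: "sem Fr B' = sem Fr B"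
    unfolding C DX by (simp_all only: sem.simps(3) semFr_Lam dterm.inject)
  have "BV A' \<inter> FV B' = {}" using clean unfolding C clean_def by auto
  then have G: "G = repl A' b B'" unfolding G_def by (rule graft_repl)
  have "sem Fr G = sem (Fr(b := sem Fr B')) A'" unfolding G by (rule sem_repl)
  also have "\<dots> = openat 0 (sem Fr B') (sem (Fr(b := Bd 0)) A')" by (rule semFr_open) (rule lc_D)
  also have "\<dots> = openat 0 (sem Fr B) TA" by (simp only: e1 e2)
  also have "\<dots> = sem (Fr(v := sem Fr B)) A" unfolding TA_def by (rule semFr_open[symmetric]) (rule lc_D)
  also have "\<dots> = sem Fr Y" unfolding Y by (rule sem_repl[symmetric])
  finally have "alpha'_star G Y" by (rule complete)
  then have "beta''_star G Y" unfolding alpha'_star_def beta''_star_def by (rule rtc_mono) simp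
  with XG show ?thesis unfolding beta''_star_def by simp
qed

lemma part2: "beta' A B \<Longrightarrow> beta''_star A B"
  unfolding beta'_def
proof (induction rule: compat.induct)
  case (base A B) then show ?case by (rule part2_base)
next
  case (appL A B C) show ?case using appL.IH unfolding beta''_star_def
    by (rule rtc_appL) (auto simp: beta''_def alpha'_def intro: compat.appL)
next
  case (appR A B C) show ?case using appR.IH unfolding beta''_star_def
    by (rule rtc_appR) (auto simp: beta''_def alpha'_def intro: compat.appR)
next
  case (lam A B u) show ?case using lam.IH unfolding beta''_star_def
    by (rule rtc_lam) (auto simp: beta''_def alpha'_def intro: compat.lam)
qed

theorem lemma5p8:
  shows "(\<forall>A B. beta'' A B \<longrightarrow> beta'_star A B) \<and> (\<forall>A B. beta' A B \<longrightarrow> beta''_star A B)"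
  using part1 part2 by blast

end
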